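(* Let $D$ be an integral domain and let $\mathcal{E}(D)$ be its essential prime spectrum. The following are equivalent: (i) $D$ is a PvMD; (ii) $D$ is an essential domain and there is a subset $Y\subseteq\operatorname{Spec}(D)$ such that $\{D_{\mathfrak p}:\mathfrak p\in Y\}$ is an essential representation of $D$ and $\operatorname{Cl}^c(Y)\subseteq\mathcal{E}(D)$.
   Context: All rings are commutative with identity. For an integral domain $D$ with quotient field $K$ and a nonzero fractional ideal $I$, set $(D:I)=\{x\in K: xI\subseteq D\}$, $I^v=(D:(D:I))$, and $I^t=\bigcup\{J^v: J\subseteq I,\ J \text{ finitely generated}\}$. An ideal $I$ is a $t$-ideal if $I=(0)$ or $I=I^t$; a $t$-prime is a prime $t$-ideal; a $t$-maximal ideal is a $t$-ideal maximal among proper $t$-ideals; $t\text{-Spec}(D)$ is the set of $t$-primes (including $(0)$). $D$ is a PvMD (Prüfer $v$-multiplication domain) if $D_{\mathfrak m}$ is a valuation domain for every $t$-maximal ideal $\mathfrak m$ of $D$. A valuation overring of $D$ is essential if it equals $D_{\mathfrak p}$ for some prime $\mathfrak p$ of $D$. An essential representation of $D$ is a family of essential valuation overrings of $D$ whose intersection is $D$; $D$ is essential if it has an essential representation. $\mathcal{E}(D)=\{\mathfrak p\in\operatorname{Spec}(D): D_{\mathfrak p}\text{ is a valuation domain}\}$. The constructible topology on $\operatorname{Spec}(A)$ is the coarsest topology in which every set $D(f)=\{\mathfrak p: f\notin\mathfrak p\}$, $f\in A$, is clopen; $\operatorname{Cl}^c(Y)$ denotes the closure of $Y\subseteq\operatorname{Spec}(A)$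 in this topology. *)

theory Defs
  imports "HOL-Analysis.Analysis"
begin

(* Convention: the integral domain D is a subring of a field K (the type 'k),
   and K is the quotient field of D. *)

definition subring :: "'k::field set \<Rightarrow> bool" where
  "subring D \<longleftrightarrow> 0 \<in> D \<and> 1 \<in> D \<and>
     (\<forall>a\<in>D. \<forall>b\<in>D. a + b \<in> D \<and> a - b \<in> D \<and> a * b \<in> D)"

definition frac_set :: "'k::field set \<Rightarrow> 'k set" where
  "frac_set D = {a / b | a b. a \<in> D \<and> b \<in> D \<and> b \<noteq> 0}"

definition quotient_field_of :: "'k::field set \<Rightarrow> bool" where
  "quotient_field_of D \<longleftrightarrow> subring D \<and> frac_set D = UNIV"

definition ideal_of :: "'k::field set \<Rightarrow> 'k set \<Rightarrow> bool" where
  "ideal_of D I \<longleftrightarrow> I \<subseteq> D \<and> 0 \<in> I \<and>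
     (\<forall>a\<in>I. \<forall>b\<in>I. a + b \<in> I) \<and> (\<forall>d\<in>D. \<forall>a\<in>I. d * a \<in> I)"

definition prime_ideal_of :: "'k::field set \<Rightarrow> 'k set \<Rightarrow> bool" where
  "prime_ideal_of D P \<longleftrightarrow> ideal_of D P \<and> P \<noteq> D \<and>
     (\<forall>a\<in>D. \<forall>b\<in>D. a * b \<in> P \<longrightarrow> a \<in> P \<or> b \<in> P)"

definition Spec :: "'k::field set \<Rightarrow> 'k set set" where
  "Spec D = {P. prime_ideal_of D P}"

definition ideal_gen :: "'k::field set \<Rightarrow> 'k set \<Rightarrow> 'k set" where
  "ideal_gen D F = {(\<Sum>x\<in>F. c x * x) | c. \<forall>x\<in>F. c x \<in> D}"

definition fin_gen_ideal :: "'k::field set \<Rightarrow> 'k set \<Rightarrow> bool" where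
  "fin_gen_ideal D J \<longleftrightarrow> (\<exists>F. finite F \<and> F \<subseteq> D \<and> J = ideal_gen D F)"

definition colon :: "'k::field set \<Rightarrow> 'k set \<Rightarrow> 'k set" where
  "colon D I = {x. \<forall>y\<in>I. x * y \<in> D}"

definition v_op :: "'k::field set \<Rightarrow> 'k set \<Rightarrow> 'k set" where
  "v_op D I = colon D (colon D I)"

definition t_op :: "'k::field set \<Rightarrow> 'k set \<Rightarrow> 'k set" where
  "t_op D I = \<Union>{v_op D J | J. J \<subseteq> I \<and> fin_gen_ideal D J \<and> J \<noteq> {0}}"

definition t_ideal :: "'k::field set \<Rightarrow> 'k set \<Rightarrow> bool" where
  "t_ideal D I \<longleftrightarrow> ideal_of D I \<and> (I = {0} \<or> I = t_op D I)"

definition t_maximal :: "'k::field set \<Rightarrow> 'k set \<Rightarrow> bool" where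
  "t_maximal D M \<longleftrightarrow> t_ideal D M \<and> M \<noteq> D \<and>
     (\<forall>J. t_ideal D J \<and> J \<noteq> D \<and> M \<subseteq> J \<longrightarrow> J = M)"

definition localization :: "'k::field set \<Rightarrow> 'k set \<Rightarrow> 'k set" where
  "localization D P = {a / b | a b. a \<in> D \<and> b \<in> D \<and> b \<notin> P}"

definition valuation_domain :: "'k::field set \<Rightarrow> bool" where
  "valuation_domain V \<longleftrightarrow> subring V \<and>
     (\<forall>x\<in>frac_set V. x \<noteq> 0 \<longrightarrow> x \<in> V \<or> inverse x \<in> V)"

definition PvMD :: "'k::field set \<Rightarrow> bool" where
  "PvMD D \<longleftrightarrow> (\<forall>M. t_maximal D M \<longrightarrow> valuation_domain (localization D M))"

definition essential_valuation_overring :: "'k::field set \<Rightarrow> 'k set \<Rightarrow> bool" where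
  "essential_valuation_overring D V \<longleftrightarrow> valuation_domain V \<and> D \<subseteq> V \<and>
     (\<exists>P\<in>Spec D. V = localization D P)"

definition essential_representation :: "'k::field set \<Rightarrow> 'k set set \<Rightarrow> bool" where
  "essential_representation D \<V> \<longleftrightarrow>
     (\<forall>V\<in>\<V>. essential_valuation_overring D V) \<and> \<Inter>\<V> = D"

definition essential_domain :: "'k::field set \<Rightarrow> bool" where
  "essential_domain D \<longleftrightarrow> (\<exists>\<V>. essential_representation D \<V>)"

definition ess_spec :: "'k::field set \<Rightarrow> 'k set set" where
  "ess_spec D = {P \<in> Spec D. valuation_domain (localization D P)}"

definition basic_open :: "'k::field set \<Rightarrow> 'k \<Rightarrow> 'k set set" where
  "basic_open D f = {P \<in> Spec D. f \<notin> P}"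

definition constructible_topology :: "'k::field set \<Rightarrow> 'k set topology" where
  "constructible_topology D = topology_generated_by
     ({basic_open D f | f. f \<in> D} \<union> {Spec D - basic_open D f | f. f \<in> D})"

end

theory Submission imports Defs begin

context fixes D :: "'k::field set" assumes sr: "subring D"
begin

lemma s0: "0 \<in> D" and s1: "1 \<in> D"
  and sadd: "a \<in> D \<Longrightarrow> b \<in> D \<Longrightarrow> a + b \<in> D"
  and sdiff: "a \<in> D \<Longrightarrow> b \<in> D \<Longrightarrow> a - b \<in> D"
  and smult: "a \<in> D \<Longrightarrow> b \<in> D \<Longrightarrow> a * b \<in> D"
  using sr unfolding subring_def by auto

lemma ssum: "finite A \<Longrightarrow> (\<And>x. x \<in> A \<Longrightarrow> g x \<in> D) \<Longrightarrow> sum g A \<in> D"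
  by (induction A rule: finite_induct) (auto intro: s0 sadd)

lemma ideal_sum: "finite A \<Longrightarrow> ideal_of D I \<Longrightarrow> (\<And>x. x \<in> A \<Longrightarrow> g x \<in> I) \<Longrightarrow> sum g A \<in> I"
  by (induction A rule: finite_induct) (auto simp: ideal_of_def)

lemma ideal_one: "ideal_of D I \<Longrightarrow> 1 \<in> I \<Longrightarrow> I = D"
  unfolding ideal_of_def by (metis mult.right_neutral subsetI subset_antisym)

lemma ideal_ne: "ideal_of D I \<Longrightarrow> I \<noteq> D \<longleftrightarrow> 1 \<notin> I"
  using ideal_one s1 by blast

lemma gen_sub: "finite F \<Longrightarrow> F \<subseteq> I \<Longrightarrow> ideal_of D I \<Longrightarrow> ideal_gen D F \<subseteq> I"
  unfolding ideal_gen_def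
proof safe
  fix c assume "finite F" "F \<subseteq> I" "ideal_of D I" "\<forall>x\<in>F. c x \<in> D"
  then show "(\<Sum>x\<in>F. c x * x) \<in> I"
    by (intro ideal_sum) (auto simp: ideal_of_def)
qed

lemma gen_D: "finite F \<Longrightarrow> F \<subseteq> D \<Longrightarrow> ideal_gen D F \<subseteq> D"
proof
  fix y assume F: "finite F" "F \<subseteq> D" and "y \<in> ideal_gen D F"
  then obtain c where c: "\<forall>x\<in>F. c x \<in> D" "y = (\<Sum>x\<in>F. c x * x)" unfolding ideal_gen_def by blast
  show "y \<in> D" unfolding c(2) using F c(1) by (intro ssum) (auto intro: smult)
qed

lemma gen_mem: "f \<in> F \<Longrightarrow> finite F \<Longrightarrow> f \<in> ideal_gen D F"
proof -
  assume "f \<in> F" "finite F"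
  have "(\<Sum>x\<in>F. (if x = f then 1 else 0) * x) = (\<Sum>x\<in>F. if x = f then x else 0)"
    by (rule sum.cong) auto
  also have "\<dots> = f" using \<open>f \<in> F\<close> \<open>finite F\<close> by (simp add: sum.delta)
  finally show ?thesis unfolding ideal_gen_def using s0 s1
    by (intro CollectI exI[of _ "\<lambda>x. if x = f then 1 else 0"]) auto
qed

lemma gen_ideal: "finite F \<Longrightarrow> F \<subseteq> D \<Longrightarrow> ideal_of D (ideal_gen D F)"
proof -
  assume fF: "finite F" "F \<subseteq> D"
  show ?thesis unfolding ideal_of_def
  proof (intro conjI ballI)
    show "ideal_gen D F \<subseteq> D" using gen_D fF by blast
    show "0 \<in> ideal_gen D F" unfolding ideal_gen_def using s0
      by (intro CollectI exI[of _ "\<lambda>x. 0"]) auto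
    fix a b assume "a \<in> ideal_gen D F" "b \<in> ideal_gen D F"
    then obtain c e where c: "\<forall>x\<in>F. c x \<in> D" "a = (\<Sum>x\<in>F. c x * x)"
      and e: "\<forall>x\<in>F. e x \<in> D" "b = (\<Sum>x\<in>F. e x * x)" unfolding ideal_gen_def by blast
    have "a + b = (\<Sum>x\<in>F. (c x + e x) * x)" using c e by (simp add: sum.distrib distrib_right)
    then show "a + b \<in> ideal_gen D F" unfolding ideal_gen_def using c e sadd
      by (intro CollectI exI[of _ "\<lambda>x. c x + e x"]) auto
  next
    fix d a assume "d \<in> D" "a \<in> ideal_gen D F"
    then obtain c where c: "\<forall>x\<in>F. c x \<in> D" "a = (\<Sum>x\<in>F. c x * x)" unfolding ideal_gen_def by blast
    have "d * a = (\<Sum>x\<in>F. (d * c x) * x)" using c by (simp add: sum_distrib_left mult.assoc)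
    then show "d * a \<in> ideal_gen D F" unfolding ideal_gen_def using c smult \<open>d \<in> D\<close>
      by (intro CollectI exI[of _ "\<lambda>x. d * c x"]) auto
  qed
qed

lemma gen_nonzero: "finite F \<Longrightarrow> ideal_gen D F \<noteq> {0} \<Longrightarrow> \<exists>f\<in>F. f \<noteq> 0"
proof (rule ccontr)
  assume "finite F" "ideal_gen D F \<noteq> {0}" "\<not> (\<exists>f\<in>F. f \<noteq> 0)"
  then have "\<forall>c. (\<Sum>x\<in>F. c x * x) = 0" by (auto intro!: sum.neutral)
  then have "ideal_gen D F \<subseteq> {0}" unfolding ideal_gen_def by auto
  moreover have "0 \<in> ideal_gen D F" unfolding ideal_gen_def using s0
      by (intro CollectI exI[of _ "\<lambda>x. 0"]) auto
  ultimately show False using \<open>ideal_gen D F \<noteq> {0}\<close> by blast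
qed

lemma colon_ge: "J \<subseteq> D \<Longrightarrow> D \<subseteq> colon D J"
  unfolding colon_def using smult by blast

lemma v_D: "J \<subseteq> D \<Longrightarrow> v_op D J \<subseteq> D"
proof
  fix x assume J: "J \<subseteq> D" and x: "x \<in> v_op D J"
  have "1 \<in> colon D J" using colon_ge[OF J] s1 by blast
  then have "x * 1 \<in> D" using x unfolding v_op_def colon_def by blast
  then show "x \<in> D" by simp
qed

lemma v_ge: "J \<subseteq> v_op D J"
  unfolding v_op_def colon_def by (auto simp: mult.commute)

lemma t_D: "I \<subseteq> D \<Longrightarrow> t_op D I \<subseteq> D"
  unfolding t_op_def using v_D by blast

lemma t_ge: "ideal_of D I \<Longrightarrow> I \<noteq> {0} \<Longrightarrow> I \<subseteq> t_op D I"
proof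
  fix a assume I: "ideal_of D I" "I \<noteq> {0}" and a: "a \<in> I"
  obtain a' where a': "a' \<in> I" "a' \<noteq> 0" using I unfolding ideal_of_def by blast
  define a'' where "a'' = (if a = 0 then a' else a)"
  have a'': "a'' \<in> I" "a'' \<noteq> 0" using a a' unfolding a''_def by auto
  have aD: "a'' \<in> D" using a'' I unfolding ideal_of_def by auto
  let ?J = "ideal_gen D {a''}"
  have j1: "?J \<subseteq> I" using gen_sub a'' I by auto
  have j2: "fin_gen_ideal D ?J" unfolding fin_gen_ideal_def using aD by blast
  have "a'' \<in> ?J" using gen_mem by auto
  then have j3: "?J \<noteq> {0}" using a'' by auto
  have j4: "a \<in> v_op D ?J"
  proof (cases "a = 0")
    case True then show ?thesis unfolding v_op_def colon_def using s0 by auto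
  next
    case False then show ?thesis using v_ge \<open>a'' \<in> ?J\<close> a''_def by auto
  qed
  have "v_op D ?J \<in> {v_op D J | J. J \<subseteq> I \<and> fin_gen_ideal D J \<and> J \<noteq> {0}}"
    using j1 j2 j3 by (intro CollectI exI[of _ ?J]) simp
  then show "a \<in> t_op D I" unfolding t_op_def using j4 by (rule UnionI)
qed

lemma t_idealI: "ideal_of D I \<Longrightarrow> I \<noteq> {0} \<Longrightarrow>
   (\<And>J. J \<subseteq> I \<Longrightarrow> fin_gen_ideal D J \<Longrightarrow> J \<noteq> {0} \<Longrightarrow> v_op D J \<subseteq> I) \<Longrightarrow> t_ideal D I"
proof -
  assume a: "ideal_of D I" "I \<noteq> {0}" and h: "\<And>J. J \<subseteq> I \<Longrightarrow> fin_gen_ideal D J \<Longrightarrow> J \<noteq> {0} \<Longrightarrow> v_op D J \<subseteq> I"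
  have "t_op D I \<subseteq> I" unfolding t_op_def using h by auto
  then show ?thesis unfolding t_ideal_def using t_ge[OF a] a by auto
qed

lemma t_idealD: "t_ideal D I \<Longrightarrow> I \<noteq> {0} \<Longrightarrow> J \<subseteq> I \<Longrightarrow> fin_gen_ideal D J \<Longrightarrow> J \<noteq> {0} \<Longrightarrow> v_op D J \<subseteq> I"
  unfolding t_ideal_def t_op_def by auto


lemma loc_mem: "x \<in> localization D P \<Longrightarrow> \<exists>a b. a \<in> D \<and> b \<in> D \<and> b \<notin> P \<and> x = a / b"
  unfolding localization_def by blast

lemma prime_one: "prime_ideal_of D P \<Longrightarrow> 1 \<notin> P"
  unfolding prime_ideal_of_def using ideal_ne by blast

lemma prime_zero: "prime_ideal_of D P \<Longrightarrow> 0 \<in> P"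
  unfolding prime_ideal_of_def ideal_of_def by blast

lemma D_sub_loc: "prime_ideal_of D P \<Longrightarrow> D \<subseteq> localization D P"
proof
  fix x assume "prime_ideal_of D P" "x \<in> D"
  then show "x \<in> localization D P" unfolding localization_def using prime_one s1
    by (intro CollectI exI[of _ x] exI[of _ 1]) auto
qed

lemma prime_mult: "prime_ideal_of D P \<Longrightarrow> b \<in> D \<Longrightarrow> d \<in> D \<Longrightarrow> b \<notin> P \<Longrightarrow> d \<notin> P \<Longrightarrow> b * d \<notin> P"
  unfolding prime_ideal_of_def by blast

lemma loc_subring: "prime_ideal_of D P \<Longrightarrow> subring (localization D P)"
proof -
  assume P: "prime_ideal_of D P"
  have z: "0 \<in> P" using prime_zero P .
  have cl: "x \<in> localization D P" if "x = a / b" "a \<in> D" "b \<in> D" "b \<notin> P" for x a b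
    using that unfolding localization_def by blast
  show ?thesis unfolding subring_def
  proof (intro conjI ballI)
    show "0 \<in> localization D P" using cl[of 0 0 1] s0 s1 prime_one[OF P] by auto
    show "1 \<in> localization D P" using cl[of 1 1 1] s1 prime_one[OF P] by auto
    fix x y assume "x \<in> localization D P" "y \<in> localization D P"
    then obtain a b c d where ab: "a \<in> D" "b \<in> D" "b \<notin> P" "x = a / b"
      and cd: "c \<in> D" "d \<in> D" "d \<notin> P" "y = c / d" using loc_mem by metis
    have b0: "b \<noteq> 0" and d0: "d \<noteq> 0" using ab cd z by auto
    have bd: "b * d \<in> D" "b * d \<notin> P" using smult prime_mult[OF P] ab cd by auto
    have "x + y = (a * d + c * b) / (b * d)" using ab cd b0 d0 by (simp add: field_simps)
    moreover have "a * d + c * b \<in> D" using ab cd by (intro sadd smult)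
    ultimately show "x + y \<in> localization D P" using cl bd by blast
    have "x - y = (a * d - c * b) / (b * d)" using ab cd b0 d0 by (simp add: field_simps)
    moreover have "a * d - c * b \<in> D" using ab cd by (intro sdiff smult)
    ultimately show "x - y \<in> localization D P" using cl bd by blast
    have "x * y = (a * c) / (b * d)" using ab cd by simp
    moreover have "a * c \<in> D" using ab cd by (intro smult)
    ultimately show "x * y \<in> localization D P" using cl bd by blast
  qed
qed

lemma loc_mono: "P \<subseteq> Q \<Longrightarrow> localization D Q \<subseteq> localization D P"
  unfolding localization_def by blast

lemma loc_zero: "frac_set D = UNIV \<Longrightarrow> localization D {0} = UNIV"
  unfolding localization_def frac_set_def by simp

lemma zero_prime: "prime_ideal_of D {0}"
  unfolding prime_ideal_of_def ideal_of_def using s0 s1 by auto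

lemma tmax_exists:
  assumes tI: "t_ideal D I" and nz: "I \<noteq> {0}" and one: "1 \<notin> I"
  shows "\<exists>M. t_maximal D M \<and> I \<subseteq> M"
proof -
  let ?A = "{J. t_ideal D J \<and> 1 \<notin> J \<and> I \<subseteq> J}"
  have iI: "ideal_of D I" using tI unfolding t_ideal_def by blast
  obtain i where i: "i \<in> I" "i \<noteq> 0" using nz iI unfolding ideal_of_def by blast
  have "\<exists>M\<in>?A. \<forall>X\<in>?A. M \<subseteq> X \<longrightarrow> X = M"
  proof (rule subset_Zorn_nonempty)
    show "?A \<noteq> {}" using tI one by blast
    fix C assume Cne: "C \<noteq> {}" and ch: "subset.chain ?A C"
    have CA: "C \<subseteq> ?A" and tot: "\<forall>X\<in>C. \<forall>Y\<in>C. X \<subseteq> Y \<or> Y \<subseteq> X"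
      using ch unfolding subset_chain_def by auto
    have idC: "ideal_of D X" if "X \<in> C" for X using CA that unfolding t_ideal_def by blast
    have IC: "I \<subseteq> \<Union>C" using CA Cne by blast
    have iu: "ideal_of D (\<Union>C)" unfolding ideal_of_def
    proof (intro conjI ballI)
      show "\<Union>C \<subseteq> D" using idC unfolding ideal_of_def by blast
      show "0 \<in> \<Union>C" using idC Cne unfolding ideal_of_def by blast
      fix a b assume "a \<in> \<Union>C" "b \<in> \<Union>C"
      then obtain X Y where X: "X \<in> C" "a \<in> X" and Y: "Y \<in> C" "b \<in> Y" by blast
      show "a + b \<in> \<Union>C"
      proof (cases "X \<subseteq> Y")
        case True then show ?thesis using idC[OF Y(1)] X Y unfolding ideal_of_def by blast
      next
        case False then have "Y \<subseteq> X" using tot X Y by blast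
        then show ?thesis using idC[OF X(1)] X Y unfolding ideal_of_def by blast
      qed
    next
      fix d a assume "d \<in> D" "a \<in> \<Union>C"
      then show "d * a \<in> \<Union>C" using idC unfolding ideal_of_def by blast
    qed
    have nzu: "\<Union>C \<noteq> {0}" using IC i by blast
    have "t_ideal D (\<Union>C)"
    proof (rule t_idealI[OF iu nzu])
      fix J assume J: "J \<subseteq> \<Union>C" "fin_gen_ideal D J" "J \<noteq> {0}"
      then obtain F where F: "finite F" "F \<subseteq> D" "J = ideal_gen D F" unfolding fin_gen_ideal_def by blast
      have "F \<subseteq> J" using F gen_mem by blast
      then obtain B where B: "B \<in> C" "F \<subseteq> B" using finite_subset_Union_chain[OF F(1) _ Cne ch] J(1) by blast
      have "J \<subseteq> B" using gen_sub[OF F(1) B(2) idC[OF B(1)]] F(3) by simp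
      moreover have "B \<noteq> {0}" using CA B i by blast
      moreover have "t_ideal D B" using CA B by blast
      ultimately have "v_op D J \<subseteq> B" using t_idealD J by blast
      then show "v_op D J \<subseteq> \<Union>C" using B by blast
    qed
    moreover have "1 \<notin> \<Union>C" using CA by blast
    ultimately show "\<Union>C \<in> ?A" using IC by blast
  qed
  then obtain M where M: "M \<in> ?A" and mx: "\<forall>X\<in>?A. M \<subseteq> X \<longrightarrow> X = M" by blast
  have "t_maximal D M" unfolding t_maximal_def
  proof (intro conjI allI impI)
    show "t_ideal D M" using M by blast
    have iM: "ideal_of D M" using M unfolding t_ideal_def by blast
    show "M \<noteq> D" using M ideal_ne[OF iM] by blast
    fix J assume J: "t_ideal D J \<and> J \<noteq> D \<and> M \<subseteq> J"
    have iJ: "ideal_of D J" using J unfolding t_ideal_def by blast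
    have "1 \<notin> J" using J ideal_ne[OF iJ] by blast
    then show "J = M" using J M mx by blast
  qed
  then show ?thesis using M by blast
qed

lemma v_scale:
  assumes F: "finite F" "F \<subseteq> D" and b: "b \<in> D" and x: "x \<in> v_op D (ideal_gen D F)"
  shows "b * x \<in> v_op D (ideal_gen D ((*) b ` F))"
  unfolding v_op_def colon_def
proof (safe)
  fix y assume hy: "\<forall>z\<in>ideal_gen D ((*) b ` F). y * z \<in> D"
  have "y * b \<in> colon D (ideal_gen D F)" unfolding colon_def
  proof safe
    fix j assume "j \<in> ideal_gen D F"
    then obtain c where c: "\<forall>x\<in>F. c x \<in> D" "j = (\<Sum>x\<in>F. c x * x)" unfolding ideal_gen_def by blast
    have "y * b * j = (\<Sum>f\<in>F. c f * (y * (b * f)))" unfolding c(2)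
      by (simp add: sum_distrib_left mult.assoc mult.left_commute)
    moreover have yb: "y * (b * f) \<in> D" if "f \<in> F" for f
      using hy gen_mem[of "b * f" "(*) b ` F"] F that by auto
    moreover have "(\<Sum>f\<in>F. c f * (y * (b * f))) \<in> D"
    proof (rule ssum[OF F(1)])
      fix f assume "f \<in> F" then show "c f * (y * (b * f)) \<in> D" using c yb by (rule_tac smult) auto
    qed
    ultimately show "y * b * j \<in> D" by simp
  qed
  then have "x * (y * b) \<in> D" using x unfolding v_op_def colon_def by blast
  then show "b * x * y \<in> D" by (simp add: mult_ac)
qed

lemma tmax_prime:
  assumes tM: "t_maximal D M"
  shows "prime_ideal_of D M"
proof (cases "M = {0}")
  case True then show ?thesis using zero_prime by simp
next
  case Mnz: False
  have tI: "t_ideal D M" and MD: "M \<noteq> D" and mx: "\<And>J. t_ideal D J \<Longrightarrow> J \<noteq> D \<Longrightarrow> M \<subseteq> J \<Longrightarrow> J = M"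
    using tM unfolding t_maximal_def by auto
  have iM: "ideal_of D M" using tI unfolding t_ideal_def by blast
  show ?thesis unfolding prime_ideal_of_def
  proof (intro conjI iM MD ballI impI)
    fix a b assume a: "a \<in> D" and b: "b \<in> D" and ab: "a * b \<in> M"
    show "a \<in> M \<or> b \<in> M"
    proof (rule ccontr)
      assume "\<not> (a \<in> M \<or> b \<in> M)"
      then have aM: "a \<notin> M" and bM: "b \<notin> M" by auto
      have b0: "b \<noteq> 0" using bM iM unfolding ideal_of_def by auto
      define N where "N = {x \<in> D. x * b \<in> M}"
      have iN: "ideal_of D N" unfolding ideal_of_def N_def
      proof (intro conjI ballI)
        show "0 \<in> {x \<in> D. x * b \<in> M}" using s0 iM unfolding ideal_of_def by auto
        fix x y assume "x \<in> {x \<in> D. x * b \<in> M}" "y \<in> {x \<in> D. x * b \<in> M}"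
        then show "x + y \<in> {x \<in> D. x * b \<in> M}" using iM sadd unfolding ideal_of_def
          by (auto simp: distrib_right)
      next
        fix d x assume "d \<in> D" "x \<in> {x \<in> D. x * b \<in> M}"
        then show "d * x \<in> {x \<in> D. x * b \<in> M}" using iM smult unfolding ideal_of_def
          by (auto simp: mult.assoc)
      qed auto
      have MN: "M \<subseteq> N" unfolding N_def using iM b unfolding ideal_of_def by (auto simp: mult.commute)
      have Nnz: "N \<noteq> {0}" using MN Mnz iM unfolding ideal_of_def by blast
      have tN: "t_ideal D N"
      proof (rule t_idealI[OF iN Nnz])
        fix J assume J: "J \<subseteq> N" "fin_gen_ideal D J" "J \<noteq> {0}"
        then obtain F where F: "finite F" "F \<subseteq> D" "J = ideal_gen D F" unfolding fin_gen_ideal_def by blast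
        show "v_op D J \<subseteq> N"
        proof
          fix x assume x: "x \<in> v_op D J"
          have JD: "J \<subseteq> D" using gen_D[OF F(1) F(2)] F(3) by simp
          have xD: "x \<in> D" using v_D[OF JD] x by blast
          let ?J' = "ideal_gen D ((*) b ` F)"
          have bF: "(*) b ` F \<subseteq> D" using F b smult by auto
          have bx: "b * x \<in> v_op D ?J'" using v_scale[OF F(1) F(2) b] x F by simp
          have "(*) b ` F \<subseteq> M"
          proof
            fix z assume "z \<in> (*) b ` F"
            then obtain f where f: "f \<in> F" "z = b * f" by blast
            have "f \<in> J" using gen_mem[OF f(1) F(1)] F(3) by simp
            then have "f * b \<in> M" using J(1) unfolding N_def by blast
            then show "z \<in> M" using f(2) by (simp add: mult.commute)
          qed
          then have J'M: "?J' \<subseteq> M" by (rule gen_sub[rotated]) (use F iM in auto)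
          have fg: "fin_gen_ideal D ?J'" unfolding fin_gen_ideal_def using F bF by blast
          have "\<exists>f\<in>F. f \<noteq> 0" by (rule gen_nonzero[OF F(1)]) (use J(3) F(3) in simp)
          then obtain f where f: "f \<in> F" "f \<noteq> 0" by blast
          have bfJ: "b * f \<in> ?J'" by (rule gen_mem) (use F f in auto)
          have bf0: "b * f \<noteq> 0" using b0 f(2) by simp
          have "?J' \<noteq> {0}"
          proof
            assume "?J' = {0}" then show False using bfJ bf0 by simp
          qed
          then have "v_op D ?J' \<subseteq> M" using t_idealD[OF tI Mnz J'M fg] by blast
          then show "x \<in> N" using bx xD unfolding N_def by (auto simp: mult.commute)
        qed
      qed
      have "a \<in> N" using a ab unfolding N_def by simp
      then have "N \<noteq> M" using aM by blast
      then have "N = D" using mx[OF tN _ MN] by blast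
      then have "1 \<in> N" using s1 by simp
      then show False using bM unfolding N_def by simp
    qed
  qed
qed


lemma val_UNIV: "valuation_domain (UNIV :: 'k set)"
  unfolding valuation_domain_def subring_def by simp

lemma val_over: "frac_set D = UNIV \<Longrightarrow> D \<subseteq> V \<Longrightarrow> V \<subseteq> W \<Longrightarrow> subring W \<Longrightarrow> valuation_domain V \<Longrightarrow> valuation_domain W"
proof -
  assume fr: "frac_set D = UNIV" and DV: "D \<subseteq> V" and VW: "V \<subseteq> W" and sW: "subring W" and vV: "valuation_domain V"
  have "frac_set V = UNIV" using fr DV unfolding frac_set_def by blast
  then show ?thesis using vV VW sW unfolding valuation_domain_def by blast
qed

lemma topsp: "topspace (constructible_topology D) \<subseteq> Spec D"
  unfolding constructible_topology_def topology_generated_by_topspace basic_open_def by blast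

lemma open_gen: "s \<in> ({basic_open D f | f. f \<in> D} \<union> {Spec D - basic_open D f | f. f \<in> D}) \<Longrightarrow>
   openin (constructible_topology D) s"
  unfolding constructible_topology_def openin_topology_generated_by_iff
  by (rule generate_topology_on.Basis)

lemma open_nbhd: "finite F \<Longrightarrow> F \<subseteq> D \<Longrightarrow> x \<in> D \<Longrightarrow>
  openin (constructible_topology D) (basic_open D x \<inter> \<Inter>((\<lambda>f. Spec D - basic_open D f) ` F))"
proof (induction F rule: finite_induct)
  case empty
  have "basic_open D x \<in> ({basic_open D f | f. f \<in> D} \<union> {Spec D - basic_open D f | f. f \<in> D})"
    using empty by blast
  then show ?case using open_gen[of "basic_open D x"] by simp
next
  case (insert f F)
  have "Spec D - basic_open D f \<in> ({basic_open D f | f. f \<in> D} \<union> {Spec D - basic_open D f | f. f \<in> D})"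
    using insert.prems by blast
  then have h1: "openin (constructible_topology D) (Spec D - basic_open D f)" by (rule open_gen)
  have h2: "openin (constructible_topology D) (basic_open D x \<inter> \<Inter>((\<lambda>f. Spec D - basic_open D f) ` F))"
    by (rule insert.IH) (use insert.prems in auto)
  have "openin (constructible_topology D) ((Spec D - basic_open D f) \<inter>
     (basic_open D x \<inter> \<Inter>((\<lambda>f. Spec D - basic_open D f) ` F)))"
    by (rule openin_Int[OF h1 h2])
  moreover have "(Spec D - basic_open D f) \<inter> (basic_open D x \<inter> \<Inter>((\<lambda>f. Spec D - basic_open D f) ` F))
     = basic_open D x \<inter> \<Inter>((\<lambda>f. Spec D - basic_open D f) ` insert f F)" by auto
  ultimately show ?case by simp
qed

lemma Spec_prime: "P \<in> Spec D \<longleftrightarrow> prime_ideal_of D P"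
  unfolding Spec_def by simp

lemma tprime_val:
  assumes pv: "PvMD D" and fr: "frac_set D = UNIV" and P: "prime_ideal_of D P" and tP: "t_ideal D P"
  shows "valuation_domain (localization D P)"
proof (cases "P = {0}")
  case True then show ?thesis using loc_zero[OF fr] val_UNIV by simp
next
  case False
  have "1 \<notin> P" using prime_one[OF P] .
  then obtain M where M: "t_maximal D M" "P \<subseteq> M" using tmax_exists[OF tP False] by blast
  have vM: "valuation_domain (localization D M)" using pv M unfolding PvMD_def by blast
  show ?thesis
    by (rule val_over[OF fr D_sub_loc[OF tmax_prime[OF M(1)]] loc_mono[OF M(2)] loc_subring[OF P] vM])
qed

end

lemma ultra_exists:
  fixes Y :: "'a set" and B :: "'a set set"
  assumes BY: "B \<subseteq> Pow Y" and Bfip: "\<forall>G. finite G \<longrightarrow> G \<subseteq> B \<longrightarrow> Y \<inter> \<Inter>G \<noteq> {}"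
  shows "\<exists>U. B \<subseteq> U \<and> U \<subseteq> Pow Y \<and> (\<forall>A\<in>U. A \<noteq> {}) \<and> (\<forall>A C. A \<in> U \<longrightarrow> C \<in> U \<longrightarrow> A \<inter> C \<in> U)
     \<and> (\<forall>A C. A \<in> U \<longrightarrow> A \<subseteq> C \<longrightarrow> C \<subseteq> Y \<longrightarrow> C \<in> U) \<and> (\<forall>A. A \<subseteq> Y \<longrightarrow> A \<in> U \<or> Y - A \<in> U)"
proof -
  define fip where "fip U \<longleftrightarrow> (\<forall>G. finite G \<longrightarrow> G \<subseteq> U \<longrightarrow> Y \<inter> \<Inter>G \<noteq> {})" for U
  let ?A = "{U. B \<subseteq> U \<and> U \<subseteq> Pow Y \<and> fip U}"
  have "\<exists>M\<in>?A. \<forall>X\<in>?A. M \<subseteq> X \<longrightarrow> X = M"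
  proof (rule subset_Zorn_nonempty)
    show "?A \<noteq> {}" using BY Bfip unfolding fip_def by blast
    fix C assume Cne: "C \<noteq> {}" and ch: "subset.chain ?A C"
    have CA: "C \<subseteq> ?A" using ch unfolding subset_chain_def by auto
    have "fip (\<Union>C)" unfolding fip_def
    proof (intro allI impI)
      fix G assume fG: "finite G" and GC: "G \<subseteq> \<Union>C"
      obtain X where X: "X \<in> C" "G \<subseteq> X" using finite_subset_Union_chain[OF fG GC Cne ch] by blast
      have "fip X" using CA X(1) by blast
      then show "Y \<inter> \<Inter>G \<noteq> {}" using fG X(2) unfolding fip_def by blast
    qed
    then show "\<Union>C \<in> ?A" using CA Cne by blast
  qed
  then obtain U where U: "U \<in> ?A" and mx: "\<forall>X\<in>?A. U \<subseteq> X \<longrightarrow> X = U" by blast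
  have fU: "fip U" and UY: "U \<subseteq> Pow Y" and BU: "B \<subseteq> U" using U by auto
  have add: "X \<in> U" if XY: "X \<subseteq> Y" and h: "\<And>G. finite G \<Longrightarrow> G \<subseteq> U \<Longrightarrow> Y \<inter> X \<inter> \<Inter>G \<noteq> {}" for X
  proof -
    have "fip (insert X U)" unfolding fip_def
    proof (intro allI impI)
      fix G assume G: "finite G" "G \<subseteq> insert X U"
      have "Y \<inter> X \<inter> \<Inter>(G - {X}) \<noteq> {}" using h G by auto
      moreover have "Y \<inter> X \<inter> \<Inter>(G - {X}) \<subseteq> Y \<inter> \<Inter>G" by blast
      ultimately show "Y \<inter> \<Inter>G \<noteq> {}" by blast
    qed
    moreover have "B \<subseteq> insert X U" using BU by blast
    moreover have "insert X U \<subseteq> Pow Y" using UY XY by blast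
    ultimately have iA: "insert X U \<in> ?A" by simp
    have "insert X U = U" by (rule mx[rule_format, OF iA]) blast
    then show ?thesis by blast
  qed
  have ne: "\<forall>A\<in>U. A \<noteq> {}"
  proof
    fix A assume "A \<in> U"
    then have "Y \<inter> \<Inter>{A} \<noteq> {}" using fU unfolding fip_def by blast
    then show "A \<noteq> {}" by auto
  qed
  have int: "\<forall>A C. A \<in> U \<longrightarrow> C \<in> U \<longrightarrow> A \<inter> C \<in> U"
  proof (intro allI impI)
    fix A C assume AC: "A \<in> U" "C \<in> U"
    show "A \<inter> C \<in> U"
    proof (rule add)
      show "A \<inter> C \<subseteq> Y" using AC UY by blast
      fix G assume "finite G" "G \<subseteq> U"
      then have "finite (insert A (insert C G))" "insert A (insert C G) \<subseteq> U" using AC by auto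
      then have "Y \<inter> \<Inter>(insert A (insert C G)) \<noteq> {}" using fU unfolding fip_def by blast
      then show "Y \<inter> (A \<inter> C) \<inter> \<Inter>G \<noteq> {}" by (simp add: Int_assoc)
    qed
  qed
  have up: "\<forall>A C. A \<in> U \<longrightarrow> A \<subseteq> C \<longrightarrow> C \<subseteq> Y \<longrightarrow> C \<in> U"
  proof (intro allI impI)
    fix A C assume AC: "A \<in> U" "A \<subseteq> C" "C \<subseteq> Y"
    show "C \<in> U"
    proof (rule add)
      show "C \<subseteq> Y" using AC by blast
      fix G assume "finite G" "G \<subseteq> U"
      then have "finite (insert A G)" "insert A G \<subseteq> U" using AC by auto
      then have "Y \<inter> \<Inter>(insert A G) \<noteq> {}" using fU unfolding fip_def by blast
      moreover have "Y \<inter> \<Inter>(insert A G) \<subseteq> Y \<inter> C \<inter> \<Inter>G" using AC by auto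
      ultimately show "Y \<inter> C \<inter> \<Inter>G \<noteq> {}" by blast
    qed
  qed
  have ult: "\<forall>A. A \<subseteq> Y \<longrightarrow> A \<in> U \<or> Y - A \<in> U"
  proof (intro allI impI)
    fix A assume AY: "A \<subseteq> Y"
    show "A \<in> U \<or> Y - A \<in> U"
    proof (rule ccontr)
      assume nn: "\<not> (A \<in> U \<or> Y - A \<in> U)"
      obtain G1 where G1: "finite G1" "G1 \<subseteq> U" "Y \<inter> A \<inter> \<Inter>G1 = {}" using add[OF AY] nn by blast
      obtain G2 where G2: "finite G2" "G2 \<subseteq> U" "Y \<inter> (Y - A) \<inter> \<Inter>G2 = {}"
        using add[of "Y - A"] nn by blast
      have "Y \<inter> \<Inter>(G1 \<union> G2) \<noteq> {}" using fU G1 G2 unfolding fip_def by blast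
      then obtain q where q: "q \<in> Y" "q \<in> \<Inter>G1" "q \<in> \<Inter>G2" by blast
      show False
      proof (cases "q \<in> A")
        case True
        then have "q \<in> Y \<inter> A \<inter> \<Inter>G1" using q by blast
        then show False using G1(3) by blast
      next
        case False
        then have "q \<in> Y \<inter> (Y - A) \<inter> \<Inter>G2" using q by blast
        then show False using G2(3) by blast
      qed
    qed
  qed
  show ?thesis using BU UY ne int up ult by blast
qed


context fixes D :: "'k::field set" assumes sr: "subring D"
begin

lemma dir1:
  assumes fr: "frac_set D = UNIV" and pv: "PvMD D"
  shows "\<exists>Y. Y \<subseteq> Spec D \<and> essential_representation D (localization D ` Y) \<and>
          constructible_topology D closure_of Y \<subseteq> ess_spec D"
proof -
  define Y where "Y = {P \<in> Spec D. t_ideal D P}"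
  have YS: "Y \<subseteq> Spec D" unfolding Y_def by blast
  have val: "valuation_domain (localization D P)" if "P \<in> Y" for P
  proof -
    have "prime_ideal_of D P" "t_ideal D P" using that unfolding Y_def Spec_def by auto
    then show ?thesis by (rule tprime_val[OF sr pv fr])
  qed
  have rep: "essential_representation D (localization D ` Y)"
    unfolding essential_representation_def
  proof (intro conjI ballI)
    fix V assume "V \<in> localization D ` Y"
    then obtain P where P: "P \<in> Y" "V = localization D P" by blast
    then show "essential_valuation_overring D V" unfolding essential_valuation_overring_def
      using val[OF P(1)] D_sub_loc[OF sr] YS unfolding Spec_def by blast
  next
    show "\<Inter>(localization D ` Y) = D"
    proof
      show "D \<subseteq> \<Inter>(localization D ` Y)" using D_sub_loc[OF sr] YS unfolding Spec_def by blast
      show "\<Inter>(localization D ` Y) \<subseteq> D"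
      proof
        fix x assume x: "x \<in> \<Inter>(localization D ` Y)"
        have "x \<in> frac_set D" using fr by simp
        then obtain a b where ab: "a \<in> D" "b \<in> D" "b \<noteq> 0" "x = a / b" unfolding frac_set_def by blast
        define I where "I = {d \<in> D. d * x \<in> D}"
        have iI: "ideal_of D I" unfolding ideal_of_def I_def
        proof (intro conjI ballI)
          show "0 \<in> {d \<in> D. d * x \<in> D}" using s0[OF sr] by simp
          fix c d assume "c \<in> {d \<in> D. d * x \<in> D}" "d \<in> {d \<in> D. d * x \<in> D}"
          then show "c + d \<in> {d \<in> D. d * x \<in> D}" using sadd[OF sr] by (auto simp: distrib_right)
        next
          fix c d assume "c \<in> D" "d \<in> {d \<in> D. d * x \<in> D}"
          then show "c * d \<in> {d \<in> D. d * x \<in> D}" using smult[OF sr] by (auto simp: mult.assoc)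
        qed auto
        have bI: "b \<in> I" unfolding I_def using ab by simp
        then have Inz: "I \<noteq> {0}" using ab by auto
        have tI: "t_ideal D I"
        proof (rule t_idealI[OF sr iI Inz])
          fix J assume J: "J \<subseteq> I" "fin_gen_ideal D J" "J \<noteq> {0}"
          show "v_op D J \<subseteq> I"
          proof
            fix z assume z: "z \<in> v_op D J"
            have "J \<subseteq> D" using J(1) unfolding I_def by blast
            then have zD: "z \<in> D" using v_D[OF sr] z by blast
            have "x \<in> colon D J" using J(1) unfolding colon_def I_def by (auto simp: mult.commute)
            then have "z * x \<in> D" using z unfolding v_op_def colon_def by blast
            then show "z \<in> I" using zD unfolding I_def by simp
          qed
        qed
        show "x \<in> D"
        proof (cases "1 \<in> I")
          case True then show ?thesis unfolding I_def by simp
        next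
          case False
          obtain M where M: "t_maximal D M" "I \<subseteq> M" using tmax_exists[OF sr tI Inz False] by blast
          have pM: "prime_ideal_of D M" using tmax_prime[OF sr M(1)] .
          have "M \<in> Y" unfolding Y_def Spec_def using pM M(1) unfolding t_maximal_def by blast
          then have "x \<in> localization D M" using x by blast
          then obtain c e where ce: "c \<in> D" "e \<in> D" "e \<notin> M" "x = c / e" using loc_mem[OF sr] by blast
          have "e \<noteq> 0" using ce prime_zero[OF sr pM] by auto
          then have "e * x = c" using ce by simp
          then have "e \<in> I" unfolding I_def using ce by simp
          then show ?thesis using M ce by blast
        qed
      qed
    qed
  qed
  have clY: "constructible_topology D closure_of Y \<subseteq> Y"
  proof
    fix P assume P: "P \<in> constructible_topology D closure_of Y"
    then have "P \<in> topspace (constructible_topology D)" unfolding in_closure_of by blast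
    then have PS: "P \<in> Spec D" using topsp[OF sr] by blast
    then have pP: "prime_ideal_of D P" unfolding Spec_def by simp
    then have iP: "ideal_of D P" unfolding prime_ideal_of_def by blast
    show "P \<in> Y"
    proof (rule ccontr)
      assume "P \<notin> Y"
      then have nt: "\<not> t_ideal D P" using PS unfolding Y_def by blast
      then have Pnz: "P \<noteq> {0}" and Pt: "P \<noteq> t_op D P" using iP unfolding t_ideal_def by auto
      have "P \<subseteq> t_op D P" using t_ge[OF sr iP Pnz] .
      then obtain x where x: "x \<in> t_op D P" "x \<notin> P" using Pt by blast
      then obtain J where J: "J \<subseteq> P" "fin_gen_ideal D J" "J \<noteq> {0}" "x \<in> v_op D J"
        unfolding t_op_def by blast
      then obtain F where F: "finite F" "F \<subseteq> D" "J = ideal_gen D F" unfolding fin_gen_ideal_def by blast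
      have "P \<subseteq> D" using iP unfolding ideal_of_def by blast
      then have xD: "x \<in> D" using t_D[OF sr] x(1) by blast
      let ?U = "basic_open D x \<inter> \<Inter>((\<lambda>f. Spec D - basic_open D f) ` F)"
      have oU: "openin (constructible_topology D) ?U" by (rule open_nbhd[OF sr F(1) F(2) xD])
      have "F \<subseteq> J" using gen_mem[OF sr _ F(1)] F(3) by blast
      then have "F \<subseteq> P" using J(1) by blast
      then have "P \<in> ?U" using PS x unfolding basic_open_def by auto
      then obtain Q where Q: "Q \<in> Y" "Q \<in> ?U" using P oU unfolding in_closure_of by blast
      have QS: "prime_ideal_of D Q" and tQ: "t_ideal D Q" using Q unfolding Y_def Spec_def by auto
      have FQ: "F \<subseteq> Q"
      proof
        fix f assume f: "f \<in> F"
        then have "Q \<in> Spec D - basic_open D f" using Q(2) by blast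
        then show "f \<in> Q" unfolding basic_open_def by blast
      qed
      have iQ: "ideal_of D Q" using QS unfolding prime_ideal_of_def by blast
      have JQ: "J \<subseteq> Q" using gen_sub[OF sr F(1) FQ iQ] F(3) by simp
      have "0 \<in> J" using gen_ideal[OF sr F(1) F(2)] F(3) unfolding ideal_of_def by blast
      then have Qnz: "Q \<noteq> {0}" using J JQ by blast
      have "v_op D J \<subseteq> Q" by (rule t_idealD[OF sr tQ Qnz JQ J(2) J(3)])
      then show False using J Q unfolding basic_open_def by blast
    qed
  qed
  have "Y \<subseteq> ess_spec D" unfolding ess_spec_def using val YS by blast
  then show ?thesis using YS rep clY by blast
qed

lemma dir2:
  assumes fr: "frac_set D = UNIV" and YS: "Y \<subseteq> Spec D"
    and rep: "essential_representation D (localization D ` Y)"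
    and cl: "constructible_topology D closure_of Y \<subseteq> ess_spec D"
  shows "PvMD D"
  unfolding PvMD_def
proof (intro allI impI)
  fix M assume tM: "t_maximal D M"
  show "valuation_domain (localization D M)"
  proof (cases "M = {0}")
    case True then show ?thesis using loc_zero[OF sr fr] val_UNIV[OF sr] by simp
  next
    case Mnz: False
    have tI: "t_ideal D M" and MD: "M \<noteq> D" using tM unfolding t_maximal_def by auto
    have pM: "prime_ideal_of D M" using tmax_prime[OF sr tM] .
    have iM: "ideal_of D M" using tI unfolding t_ideal_def by blast
    have Yp: "prime_ideal_of D Q" if "Q \<in> Y" for Q using YS that unfolding Spec_def by blast
    have capY: "\<Inter>(localization D ` Y) = D" using rep unfolding essential_representation_def by blast
    obtain m where m: "m \<in> M" "m \<noteq> 0" using Mnz iM unfolding ideal_of_def by blast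
    have K: "\<exists>Q\<in>Y. F \<subseteq> Q" if F: "finite F" "F \<subseteq> M" for F
    proof (rule ccontr)
      assume nQ: "\<not> (\<exists>Q\<in>Y. F \<subseteq> Q)"
      let ?F = "insert m F"
      let ?J = "ideal_gen D ?F"
      have FD: "?F \<subseteq> D" using F m iM unfolding ideal_of_def by blast
      have JM: "?J \<subseteq> M" using gen_sub[OF sr _ _ iM] F m by simp
      have mJ: "m \<in> ?J" using gen_mem[OF sr] F by simp
      have fg: "fin_gen_ideal D ?J" unfolding fin_gen_ideal_def using F FD by blast
      have "?J \<noteq> {0}" using mJ m by blast
      then have vM: "v_op D ?J \<subseteq> M" using t_idealD[OF sr tI Mnz JM fg] by blast
      have "1 \<in> v_op D ?J" unfolding v_op_def colon_def
      proof (safe)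
        fix y assume hy: "\<forall>z\<in>?J. y * z \<in> D"
        have "y \<in> \<Inter>(localization D ` Y)"
        proof
          fix Q assume Q1: "Q \<in> Y"
          then obtain f where f: "f \<in> ?F" "f \<notin> Q" using nQ by blast
          have "f \<in> ?J" using gen_mem[OF sr] f F by simp
          then have yf: "y * f \<in> D" using hy by blast
          have "f \<noteq> 0" using f prime_zero[OF sr Yp[OF Q1]] by auto
          then have "y = (y * f) / f" by simp
          moreover have "f \<in> D" using f FD by blast
          ultimately show "y \<in> localization D Q" unfolding localization_def using yf f(2) by blast
        qed
        then show "1 * y \<in> D" using capY by simp
      qed
      then have "1 \<in> M" using vM by blast
      then show False using ideal_one[OF sr iM] MD by blast
    qed
    define B where "B = (\<lambda>F. {Q \<in> Y. F \<subseteq> Q}) ` {F. finite F \<and> F \<subseteq> M}"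
    have BY: "B \<subseteq> Pow Y" unfolding B_def by blast
    have Bfip: "Y \<inter> \<Inter>G \<noteq> {}" if G: "finite G" "G \<subseteq> B" for G
    proof -
      obtain G' where G': "G' \<subseteq> {F. finite F \<and> F \<subseteq> M}" "finite G'" "G = (\<lambda>F. {Q \<in> Y. F \<subseteq> Q}) ` G'"
        using finite_subset_image[OF G(1) G(2)[unfolded B_def]] by blast
      have fu: "finite (\<Union>G')" "\<Union>G' \<subseteq> M" using G' by auto
      from K[OF fu(1) fu(2)] obtain Q where "Q \<in> Y" "\<Union>G' \<subseteq> Q" ..
      then have "Q \<in> Y \<inter> \<Inter>G" using G'(3) by auto
      then show ?thesis by blast
    qed
    have Bfip': "\<forall>G. finite G \<longrightarrow> G \<subseteq> B \<longrightarrow> Y \<inter> \<Inter>G \<noteq> {}" using Bfip by blast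
    obtain U where BU: "B \<subseteq> U" and UY: "U \<subseteq> Pow Y" and ne: "\<forall>A\<in>U. A \<noteq> {}"
      and int: "\<forall>A C. A \<in> U \<longrightarrow> C \<in> U \<longrightarrow> A \<inter> C \<in> U"
      and up: "\<forall>A C. A \<in> U \<longrightarrow> A \<subseteq> C \<longrightarrow> C \<subseteq> Y \<longrightarrow> C \<in> U"
      and ult: "\<forall>A. A \<subseteq> Y \<longrightarrow> A \<in> U \<or> Y - A \<in> U"
      using ultra_exists[where B=B and Y=Y, OF BY Bfip'] by (elim exE conjE) blast
    have int': "A \<inter> C \<in> U" if "A \<in> U" "C \<in> U" for A C using int that by blast
    have up': "C \<in> U" if "A \<in> U" "A \<subseteq> C" "C \<subseteq> Y" for A C using up that by blast
    have ult': "Y - A \<in> U" if "A \<subseteq> Y" "A \<notin> U" for A using ult that by blast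
    have inB: "{Q \<in> Y. F \<subseteq> Q} \<in> U" if "finite F" "F \<subseteq> M" for F
      using BU that unfolding B_def by blast
    define Q0 where "Q0 = {f \<in> D. {Q \<in> Y. f \<in> Q} \<in> U}"
    have Y0: "{Q \<in> Y. 0 \<in> Q} = Y" using prime_zero[OF sr Yp] by blast
    have YU: "Y \<in> U" using inB[of "{}"] by simp
    have pQ0: "prime_ideal_of D Q0" unfolding prime_ideal_of_def ideal_of_def
    proof (intro conjI ballI impI)
      show "Q0 \<subseteq> D" unfolding Q0_def by blast
      show "0 \<in> Q0" unfolding Q0_def using Y0 YU s0[OF sr] by simp
      fix a b assume a: "a \<in> Q0" and b: "b \<in> Q0"
      have "{Q \<in> Y. a \<in> Q} \<inter> {Q \<in> Y. b \<in> Q} \<in> U" by (rule int') (use a b in \<open>auto simp: Q0_def\<close>)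
      moreover have "{Q \<in> Y. a \<in> Q} \<inter> {Q \<in> Y. b \<in> Q} \<subseteq> {Q \<in> Y. a + b \<in> Q}"
        using Yp unfolding prime_ideal_of_def ideal_of_def by blast
      ultimately have "{Q \<in> Y. a + b \<in> Q} \<in> U" by (rule up') blast
      then show "a + b \<in> Q0" using a b sadd[OF sr] unfolding Q0_def by blast
    next
      fix d a assume d: "d \<in> D" and a: "a \<in> Q0"
      have "{Q \<in> Y. a \<in> Q} \<subseteq> {Q \<in> Y. d * a \<in> Q}"
        using Yp d unfolding prime_ideal_of_def ideal_of_def by blast
      moreover have "{Q \<in> Y. a \<in> Q} \<in> U" using a unfolding Q0_def by blast
      ultimately have "{Q \<in> Y. d * a \<in> Q} \<in> U" by (rule_tac up') blast+
      then show "d * a \<in> Q0" using a d smult[OF sr] unfolding Q0_def by blast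
    next
      have "{Q \<in> Y. 1 \<in> Q} = {}" using prime_one[OF sr Yp] by blast
      then have "1 \<notin> Q0" using ne unfolding Q0_def by auto
      then show "Q0 \<noteq> D" using s1[OF sr] by blast
    next
      fix a b assume a: "a \<in> D" and b: "b \<in> D" and ab: "a * b \<in> Q0"
      show "a \<in> Q0 \<or> b \<in> Q0"
      proof (cases "a \<in> Q0")
        case True then show ?thesis by blast
      next
        case False
        then have "{Q \<in> Y. a \<in> Q} \<notin> U" using a unfolding Q0_def by blast
        then have "Y - {Q \<in> Y. a \<in> Q} \<in> U" by (rule_tac ult') blast
        moreover have "{Q \<in> Y. a * b \<in> Q} \<in> U" using ab unfolding Q0_def by blast
        ultimately have "(Y - {Q \<in> Y. a \<in> Q}) \<inter> {Q \<in> Y. a * b \<in> Q} \<in> U" by (rule int')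
        moreover have "(Y - {Q \<in> Y. a \<in> Q}) \<inter> {Q \<in> Y. a * b \<in> Q} \<subseteq> {Q \<in> Y. b \<in> Q}"
          using Yp a b unfolding prime_ideal_of_def by blast
        ultimately have "{Q \<in> Y. b \<in> Q} \<in> U" by (rule up') blast
        then show ?thesis using b unfolding Q0_def by blast
      qed
    qed
    have MQ0: "M \<subseteq> Q0"
    proof
      fix x assume "x \<in> M"
      then have "{Q \<in> Y. {x} \<subseteq> Q} \<in> U" using inB[of "{x}"] by blast
      then show "x \<in> Q0" unfolding Q0_def using \<open>x \<in> M\<close> iM unfolding ideal_of_def by auto
    qed
    let ?S = "{basic_open D f | f. f \<in> D} \<union> {Spec D - basic_open D f | f. f \<in> D}"
    have gen: "{Q \<in> Y. Q \<in> T} \<in> U" if "generate_topology_on ?S T" "Q0 \<in> T" for T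
      using that
    proof (induction rule: generate_topology_on.induct)
      case Empty then show ?case by simp
    next
      case (Int a b)
      then have "{Q \<in> Y. Q \<in> a} \<inter> {Q \<in> Y. Q \<in> b} \<in> U" by (intro int') auto
      moreover have "{Q \<in> Y. Q \<in> a} \<inter> {Q \<in> Y. Q \<in> b} = {Q \<in> Y. Q \<in> a \<inter> b}" by blast
      ultimately show ?case by simp
    next
      case (UN K)
      then obtain k where k: "k \<in> K" "Q0 \<in> k" by blast
      then have "{Q \<in> Y. Q \<in> k} \<in> U" using UN.IH by blast
      moreover have "{Q \<in> Y. Q \<in> k} \<subseteq> {Q \<in> Y. Q \<in> \<Union>K}" using k by blast
      ultimately show ?case by (rule up') blast
    next
      case (Basis s)
      then consider f where "f \<in> D" "s = basic_open D f" | f where "f \<in> D" "s = Spec D - basic_open D f"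
        by blast
      then show ?case
      proof cases
        case 1
        then have "f \<notin> Q0" using Basis unfolding basic_open_def by blast
        then have "{Q \<in> Y. f \<in> Q} \<notin> U" using 1 unfolding Q0_def by blast
        then have "Y - {Q \<in> Y. f \<in> Q} \<in> U" by (rule_tac ult') blast
        moreover have "Y - {Q \<in> Y. f \<in> Q} = {Q \<in> Y. Q \<in> s}" using 1 YS unfolding basic_open_def by blast
        ultimately show ?thesis by simp
      next
        case 2
        have "Q0 \<in> Spec D" using pQ0 unfolding Spec_def by simp
        then have "f \<in> Q0" using Basis 2 unfolding basic_open_def by blast
        then have "{Q \<in> Y. f \<in> Q} \<in> U" unfolding Q0_def by blast
        moreover have "{Q \<in> Y. f \<in> Q} = {Q \<in> Y. Q \<in> s}" using 2 YS unfolding basic_open_def by blast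
        ultimately show ?thesis by simp
      qed
    qed
    have "Q0 \<in> constructible_topology D closure_of Y"
      unfolding in_closure_of
    proof (intro conjI allI impI)
      have "Q0 \<in> basic_open D 1" using pQ0 prime_one[OF sr pQ0] unfolding basic_open_def Spec_def by simp
      moreover have "basic_open D 1 \<in> ?S" using s1[OF sr] by blast
      ultimately show "Q0 \<in> topspace (constructible_topology D)"
        unfolding constructible_topology_def topology_generated_by_topspace by blast
      fix T assume T: "Q0 \<in> T \<and> openin (constructible_topology D) T"
      then have "generate_topology_on ?S T"
        unfolding constructible_topology_def openin_topology_generated_by_iff by blast
      then have "{Q \<in> Y. Q \<in> T} \<in> U" using gen T by blast
      then have "{Q \<in> Y. Q \<in> T} \<noteq> {}" using ne by blast
      then show "\<exists>y. y \<in> Y \<and> y \<in> T" by blast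
    qed
    then have "Q0 \<in> ess_spec D" using cl by blast
    then have vQ0: "valuation_domain (localization D Q0)" unfolding ess_spec_def by blast
    show ?thesis
      by (rule val_over[OF sr fr D_sub_loc[OF sr pQ0] loc_mono[OF sr MQ0] loc_subring[OF sr pM] vQ0])
  qed
qed

end

theorem theorem2p4:
  fixes D :: "'k::field set"
  assumes "quotient_field_of D"
  shows "PvMD D \<longleftrightarrow>
    (essential_domain D \<and>
     (\<exists>Y. Y \<subseteq> Spec D \<and> essential_representation D (localization D ` Y) \<and>
          constructible_topology D closure_of Y \<subseteq> ess_spec D))"
proof -
  have sr: "subring D" and fr: "frac_set D = UNIV" using assms unfolding quotient_field_of_def by auto
  show ?thesis
  proof
    assume "PvMD D"
    then show "essential_domain D \<and>
     (\<exists>Y. Y \<subseteq> Spec D \<and> essential_representation D (localization D ` Y) \<and>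
          constructible_topology D closure_of Y \<subseteq> ess_spec D)"
      using dir1[OF sr fr] unfolding essential_domain_def by blast
  next
    assume "essential_domain D \<and>
     (\<exists>Y. Y \<subseteq> Spec D \<and> essential_representation D (localization D ` Y) \<and>
          constructible_topology D closure_of Y \<subseteq> ess_spec D)"
    then show "PvMD D" using dir2[OF sr fr] by blast
  qed
qed

end
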